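(* Let $K$ be a ring with unit and let $M\subseteq M_n(K)$ be a monoid (under matrix multiplication, containing the identity) consisting of block upper triangular matrices of the form $\begin{pmatrix} A & B\\ 0 & C\end{pmatrix}$ with $A\in M_m(K)$, $C\in M_r(K)$, $B\in M_{m,r}(K)$, $m+r=n$. Let $\varphi\colon M\to M_m(K)\times M_r(K)$ be the projection $\begin{pmatrix} A & B\\ 0 & C\end{pmatrix}\mapsto (A,C)$ to the diagonal blocks, and set $N=\varphi(M)$. Then for all $n_1,n_2\in N$, the monoid $\mathrm{tr}_{\varphi}(n_1,n_2)$ embeds (via an injective monoid homomorphism) in the additive group $M_{m,r}(K)$ of $m\times r$ matrices over $K$.
   Context: For a monoid homomorphism $\varphi\colon M\to N$ and $(n_1,n_2)\in N\times N$, the trace $\mathrm{tr}_{\varphi}(n_1,n_2)$ is the quotient of the submonoid $\{m\in M\mid n_1\varphi(m)=n_1,\ \varphi(m)n_2=n_2\}$ of $M$ by the congruence $\equiv$ defined by $m\equiv m'$ if and only if $m_1mm_2=m_1m'm_2$ for all $m_1\in\varphi^{-1}(n_1)$ and all $m_2\in\varphi^{-1}(n_2)$. Here $N=\varphi(M)$ is a submonoid of the product monoid $M_m(K)\times M_r(K)$. *)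

theory Defs
  imports "HOL-Analysis.Analysis" "HOL-Algebra.Group"
begin

text \<open>Generic trace of a monoid homomorphism phi : M -> N at (n1,n2).
  M is given by its carrier, multiplication and unit; N by its multiplication.\<close>

definition tr_sub ::
  "'a set \<Rightarrow> ('a \<Rightarrow> 'b) \<Rightarrow> ('b \<Rightarrow> 'b \<Rightarrow> 'b) \<Rightarrow> 'b \<Rightarrow> 'b \<Rightarrow> 'a set" where
  "tr_sub M phi nmul n1 n2 = {x \<in> M. nmul n1 (phi x) = n1 \<and> nmul (phi x) n2 = n2}"

definition tr_cong ::
  "'a set \<Rightarrow> ('a \<Rightarrow> 'a \<Rightarrow> 'a) \<Rightarrow> ('a \<Rightarrow> 'b) \<Rightarrow> ('b \<Rightarrow> 'b \<Rightarrow> 'b) \<Rightarrow> 'b \<Rightarrow> 'b \<Rightarrow> ('a \<times> 'a) set" where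
  "tr_cong M mul phi nmul n1 n2 =
     {(x, y). x \<in> tr_sub M phi nmul n1 n2 \<and> y \<in> tr_sub M phi nmul n1 n2 \<and>
        (\<forall>m1 \<in> M. \<forall>m2 \<in> M. phi m1 = n1 \<longrightarrow> phi m2 = n2 \<longrightarrow>
           mul (mul m1 x) m2 = mul (mul m1 y) m2)}"

text \<open>The quotient monoid tr_phi(n1,n2): elements are congruence classes.\<close>
definition trace_monoid ::
  "'a set \<Rightarrow> ('a \<Rightarrow> 'a \<Rightarrow> 'a) \<Rightarrow> 'a \<Rightarrow> ('a \<Rightarrow> 'b) \<Rightarrow> ('b \<Rightarrow> 'b \<Rightarrow> 'b) \<Rightarrow> 'b \<Rightarrow> 'b \<Rightarrow> 'a set monoid" where
  "trace_monoid M mul e phi nmul n1 n2 =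
     \<lparr> carrier = tr_sub M phi nmul n1 n2 // tr_cong M mul phi nmul n1 n2,
       mult = (\<lambda>X Y. \<Union>x\<in>X. \<Union>y\<in>Y. tr_cong M mul phi nmul n1 n2 `` {mul x y}),
       one = tr_cong M mul phi nmul n1 n2 `` {e} \<rparr>"

text \<open>Projection of an (m+r)x(m+r) matrix onto its two diagonal blocks.\<close>
definition diag_blocks ::
  "'k ^ ('m::finite + 'r::finite) ^ ('m + 'r) \<Rightarrow> ('k ^ 'm ^ 'm) \<times> ('k ^ 'r ^ 'r)" where
  "diag_blocks X = ((\<chi> i j. X $ Inl i $ Inl j), (\<chi> i j. X $ Inr i $ Inr j))"

text \<open>Componentwise multiplication in M_m(K) x M_r(K).\<close>
definition pair_mult ::
  "('k::semiring_1 ^ 'm::finite ^ 'm) \<times> ('k ^ 'r::finite ^ 'r) \<Rightarrow> ('k ^ 'm ^ 'm) \<times> ('k ^ 'r ^ 'r)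
     \<Rightarrow> ('k ^ 'm ^ 'm) \<times> ('k ^ 'r ^ 'r)" where
  "pair_mult p q = (fst p ** fst q, snd p ** snd q)"

text \<open>The additive group of m x r matrices, as an Algebra monoid.\<close>
definition add_matrix_monoid :: "('k::ab_group_add ^ 'r::finite ^ 'm::finite) monoid" where
  "add_matrix_monoid = \<lparr> carrier = UNIV, mult = (+), one = 0 \<rparr>"

end

theory Submission
  imports Defs
begin

definition blkUL :: "'k ^ ('m::finite + 'r::finite) ^ ('m + 'r) \<Rightarrow> 'k ^ 'm ^ 'm" where
  "blkUL X = (\<chi> i j. X $ Inl i $ Inl j)"
definition blkUR :: "'k ^ ('m::finite + 'r::finite) ^ ('m + 'r) \<Rightarrow> 'k ^ 'r ^ 'm" where
  "blkUR X = (\<chi> i j. X $ Inl i $ Inr j)"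
definition blkLR :: "'k ^ ('m::finite + 'r::finite) ^ ('m + 'r) \<Rightarrow> 'k ^ 'r ^ 'r" where
  "blkLR X = (\<chi> i j. X $ Inr i $ Inr j)"

lemma sum_UNIV_plus:
  "(\<Sum>k\<in>(UNIV::('m::finite+'r::finite) set). g k) = (\<Sum>k\<in>UNIV. g (Inl k)) + (\<Sum>k\<in>UNIV. g (Inr k))"
  using sum.Plus[of "UNIV::'m set" "UNIV::'r set" g] by (simp add: comp_def)

lemma matrix_add_rdistrib': "((B + C) ** (A::'a::semiring_1^'n^'p)) = (B ** A) + (C ** A)"
  by (vector matrix_matrix_mult_def sum.distrib[symmetric] field_simps)

lemma UL_mult:
  fixes X Y :: "'k::ring_1 ^ ('m::finite + 'r::finite) ^ ('m + 'r)"
  assumes "\<And>i j. Y $ Inr i $ Inl j = 0"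
  shows "blkUL (X ** Y) = blkUL X ** blkUL Y"
  by (simp add: blkUL_def matrix_matrix_mult_def vec_eq_iff sum_UNIV_plus assms)

lemma LR_mult:
  fixes X Y :: "'k::ring_1 ^ ('m::finite + 'r::finite) ^ ('m + 'r)"
  assumes "\<And>i j. X $ Inr i $ Inl j = 0"
  shows "blkLR (X ** Y) = blkLR X ** blkLR Y"
  by (simp add: blkLR_def matrix_matrix_mult_def vec_eq_iff sum_UNIV_plus assms)

lemma UR_mult:
  fixes X Y :: "'k::ring_1 ^ ('m::finite + 'r::finite) ^ ('m + 'r)"
  shows "blkUR (X ** Y) = blkUL X ** blkUR Y + blkUR X ** blkLR Y"
  by (simp add: blkUL_def blkUR_def blkLR_def matrix_matrix_mult_def vec_eq_iff sum_UNIV_plus)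

lemma LL_mult:
  fixes X Y :: "'k::ring_1 ^ ('m::finite + 'r::finite) ^ ('m + 'r)"
  assumes "\<And>i j. X $ Inr i $ Inl j = 0" "\<And>i j. Y $ Inr i $ Inl j = 0"
  shows "(X ** Y) $ Inr i $ Inl j = 0"
  by (simp add: matrix_matrix_mult_def sum_UNIV_plus assms)

lemma blk_eq:
  fixes X Y :: "'k::ring_1 ^ ('m::finite + 'r::finite) ^ ('m + 'r)"
  assumes "\<And>i j. X $ Inr i $ Inl j = 0" "\<And>i j. Y $ Inr i $ Inl j = 0"
    "blkUL X = blkUL Y" "blkUR X = blkUR Y" "blkLR X = blkLR Y"
  shows "X = Y"
proof -
  have "X $ i $ j = Y $ i $ j" for i j
    using assms(3,4,5) unfolding blkUL_def blkUR_def blkLR_def vec_eq_iff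
    by (cases i; cases j) (simp_all add: assms(1,2))
  then show ?thesis by (simp add: vec_eq_iff)
qed

lemma diag_blocks_eq: "diag_blocks X = (blkUL X, blkLR X)"
  by (simp add: diag_blocks_def blkUL_def blkLR_def)

lemma mat1_blocks:
  "blkUL (mat 1 :: 'k::ring_1 ^ ('m::finite + 'r::finite) ^ ('m + 'r)) = mat 1"
  "blkLR (mat 1 :: 'k::ring_1 ^ ('m::finite + 'r::finite) ^ ('m + 'r)) = mat 1"
  "blkUR (mat 1 :: 'k::ring_1 ^ ('m::finite + 'r::finite) ^ ('m + 'r)) = 0"
  by (simp_all add: blkUL_def blkLR_def blkUR_def mat_def vec_eq_iff)

theorem lemma3p2:
  fixes M :: "('k::ring_1 ^ ('m::finite + 'r::finite) ^ ('m + 'r)) set"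
  assumes one_in: "mat 1 \<in> M"
    and mult_closed: "\<And>X Y. X \<in> M \<Longrightarrow> Y \<in> M \<Longrightarrow> X ** Y \<in> M"
    and block_upper: "\<And>X i j. X \<in> M \<Longrightarrow> X $ Inr i $ Inl j = 0"
    and n1: "n1 \<in> diag_blocks ` M"
    and n2: "n2 \<in> diag_blocks ` M"
  shows "\<exists>h. h \<in> hom (trace_monoid M (**) (mat 1) diag_blocks pair_mult n1 n2)
                     (add_matrix_monoid :: ('k ^ 'r ^ 'm) monoid)
            \<and> h (one (trace_monoid M (**) (mat 1) diag_blocks pair_mult n1 n2)) = 0
            \<and> inj_on h (carrier (trace_monoid M (**) (mat 1) diag_blocks pair_mult n1 n2))"
proof -
  obtain m1 where m1: "m1 \<in> M" "diag_blocks m1 = n1" using n1 by blast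
  obtain m2 where m2: "m2 \<in> M" "diag_blocks m2 = n2" using n2 by blast
  define A1 where "A1 = blkUL m1"
  define C2 where "C2 = blkLR m2"
  define S where "S = tr_sub M diag_blocks pair_mult n1 n2"
  define R where "R = tr_cong M (**) diag_blocks pair_mult n1 n2"
  define f where "f x = A1 ** blkUR x ** C2" for x
  have S_iff: "x \<in> S \<longleftrightarrow> x \<in> M \<and> A1 ** blkUL x = A1 \<and> blkLR m1 ** blkLR x = blkLR m1
      \<and> blkUL x ** blkUL m2 = blkUL m2 \<and> blkLR x ** C2 = C2" for x
    unfolding S_def tr_sub_def pair_mult_def A1_def C2_def
    using m1(2) m2(2) by (auto simp: diag_blocks_eq)
  have K: "blkUL m1' = A1 \<and> blkLR m2' = C2 \<and>
      blkUR ((m1' ** x) ** m2') = blkUL m1' ** blkUR m2' + f x + blkUR m1' ** blkLR m2'"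
    if x: "x \<in> S" and a: "m1' \<in> M" "diag_blocks m1' = n1" and b: "m2' \<in> M" "diag_blocks m2' = n2"
    for m1' m2' x
  proof -
    have e1: "blkUL m1' = A1" using a m1 unfolding A1_def by (metis diag_blocks_eq fst_conv)
    have e2: "blkLR m2' = C2" using b m2 unfolding C2_def by (metis diag_blocks_eq snd_conv)
    have xM: "x \<in> M" and p1: "A1 ** blkUL x = A1" and p4: "blkLR x ** C2 = C2"
      using x S_iff by auto
    have "blkUR ((m1' ** x) ** m2') = blkUL (m1' ** x) ** blkUR m2' + blkUR (m1' ** x) ** blkLR m2'"
      by (rule UR_mult)
    also have "\<dots> = (A1 ** blkUL x) ** blkUR m2' + (A1 ** blkUR x + blkUR m1' ** blkLR x) ** C2"
      using UL_mult[of x m1'] UR_mult[of m1' x] block_upper[OF xM] e1 e2 by simp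
    also have "\<dots> = A1 ** blkUR m2' + f x + blkUR m1' ** (blkLR x ** C2)"
      by (simp add: p1 f_def matrix_add_rdistrib' matrix_mul_assoc)
    finally show ?thesis using e1 e2 p4 by simp
  qed
  have R_iff: "(x, y) \<in> R \<longleftrightarrow> x \<in> S \<and> y \<in> S \<and> f x = f y" for x y
  proof
    assume xy: "(x, y) \<in> R"
    then have xS: "x \<in> S" and yS: "y \<in> S" and eq: "(m1 ** x) ** m2 = (m1 ** y) ** m2"
      using m1 m2 unfolding R_def tr_cong_def S_def by auto
    have "blkUR ((m1 ** x) ** m2) = blkUR ((m1 ** y) ** m2)" using eq by simp
    then have "f x = f y" using K[OF xS m1 m2] K[OF yS m1 m2] by simp
    then show "x \<in> S \<and> y \<in> S \<and> f x = f y" using xS yS by simp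
  next
    assume h: "x \<in> S \<and> y \<in> S \<and> f x = f y"
    then have xM: "x \<in> M" and yM: "y \<in> M" using S_iff by auto
    have "(m1' ** x) ** m2' = (m1' ** y) ** m2'"
      if a: "m1' \<in> M" "diag_blocks m1' = n1" and b: "m2' \<in> M" "diag_blocks m2' = n2" for m1' m2'
    proof (rule blk_eq)
      show "(m1' ** x ** m2') $ Inr i $ Inl j = 0" for i j
        by (simp add: block_upper mult_closed a b xM)
      show "(m1' ** y ** m2') $ Inr i $ Inl j = 0" for i j
        by (simp add: block_upper mult_closed a b yM)
      show "blkUR (m1' ** x ** m2') = blkUR (m1' ** y ** m2')"
        using K[OF _ a b, of x] K[OF _ a b, of y] h by simp
      have u1: "A1 ** blkUL x = A1" "A1 ** blkUL y = A1" using h S_iff by auto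
      have u2: "blkLR x ** C2 = C2" "blkLR y ** C2 = C2" using h S_iff by auto
      have e1: "blkUL m1' = A1" and e2: "blkLR m2' = C2" using K[OF _ a b, of x] h by auto
      show "blkUL (m1' ** x ** m2') = blkUL (m1' ** y ** m2')"
        using UL_mult[of m2' "m1' ** x"] UL_mult[of m2' "m1' ** y"]
          UL_mult[of x m1'] UL_mult[of y m1'] block_upper xM yM b(1) e1 u1 by simp
      have lr: "blkLR (m1' ** z ** m2') = blkLR m1' ** C2" if "z \<in> M" "blkLR z ** C2 = C2" for z
      proof -
        have "blkLR (m1' ** z ** m2') = blkLR (m1' ** z) ** blkLR m2'"
          using LR_mult block_upper mult_closed a(1) that(1) by blast
        also have "\<dots> = blkLR m1' ** (blkLR z ** C2)"
          using LR_mult block_upper a(1) e2 by (metis matrix_mul_assoc)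
        finally show ?thesis using that by simp
      qed
      show "blkLR (m1' ** x ** m2') = blkLR (m1' ** y ** m2')"
        using lr[OF xM u2(1)] lr[OF yM u2(2)] by simp
    qed
    then show "(x, y) \<in> R" using h unfolding R_def tr_cong_def S_def by auto
  qed
  have cls: "R `` {x} = {y \<in> S. f y = f x}" if "x \<in> S" for x
    using that R_iff by auto
  define h where "h X = f (SOME z. z \<in> X)" for X
  have hX: "h (R `` {x}) = f x" if x: "x \<in> S" for x
  proof -
    have "x \<in> R `` {x}" using x cls by auto
    then have "(SOME z. z \<in> R `` {x}) \<in> R `` {x}" by (rule someI)
    then show ?thesis using cls[OF x] unfolding h_def by auto
  qed
  have mulS: "x ** y \<in> S \<and> f (x ** y) = f x + f y" if x: "x \<in> S" and y: "y \<in> S" for x y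
  proof -
    have xM: "x \<in> M" and yM: "y \<in> M" using x y S_iff by auto
    have ul: "blkUL (x ** y) = blkUL x ** blkUL y" using UL_mult block_upper yM by blast
    have lr: "blkLR (x ** y) = blkLR x ** blkLR y" using LR_mult block_upper xM by blast
    have "x ** y \<in> S" unfolding S_iff ul lr
      using x y S_iff mult_closed xM yM by (metis matrix_mul_assoc)
    moreover have "f (x ** y) = f x + f y"
    proof -
      have "f (x ** y) = A1 ** (blkUL x ** blkUR y + blkUR x ** blkLR y) ** C2"
        by (simp add: f_def UR_mult)
      also have "\<dots> = (A1 ** blkUL x) ** blkUR y ** C2 + A1 ** blkUR x ** (blkLR y ** C2)"
        by (simp add: matrix_add_ldistrib matrix_add_rdistrib' matrix_mul_assoc)
      also have "\<dots> = f y + f x" using x y S_iff f_def by simp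
      finally show ?thesis by (simp add: add.commute)
    qed
    ultimately show ?thesis by simp
  qed
  have oneS: "mat 1 \<in> S" unfolding S_iff using one_in by (simp add: mat1_blocks)
  have carr: "carrier (trace_monoid M (**) (mat 1) diag_blocks pair_mult n1 n2) = S // R"
    by (simp add: trace_monoid_def S_def R_def)
  have hom: "h \<in> hom (trace_monoid M (**) (mat 1) diag_blocks pair_mult n1 n2)
                     (add_matrix_monoid :: ('k ^ 'r ^ 'm) monoid)"
  proof (rule homI)
    show "h X \<in> carrier (add_matrix_monoid :: ('k ^ 'r ^ 'm) monoid)" for X
      by (simp add: add_matrix_monoid_def)
    fix X Y
    assume "X \<in> carrier (trace_monoid M (**) (mat 1) diag_blocks pair_mult n1 n2)"
      "Y \<in> carrier (trace_monoid M (**) (mat 1) diag_blocks pair_mult n1 n2)"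
    then obtain x y where x: "x \<in> S" "X = R `` {x}" and y: "y \<in> S" "Y = R `` {y}"
      unfolding carr by (auto elim!: quotientE)
    define Z where "Z = (\<Union>x'\<in>X. \<Union>y'\<in>Y. R `` {x' ** y'})"
    have mul: "X \<otimes>\<^bsub>trace_monoid M (**) (mat 1) diag_blocks pair_mult n1 n2\<^esub> Y = Z"
      by (simp add: trace_monoid_def Z_def R_def)
    have allz: "f z = f x + f y" if "z \<in> Z" for z
    proof -
      from that obtain x' y' where x': "x' \<in> X" and y': "y' \<in> Y" and z: "z \<in> R `` {x' ** y'}"
        unfolding Z_def by blast
      have x'S: "x' \<in> S" "f x' = f x" using x' x cls by auto
      have y'S: "y' \<in> S" "f y' = f y" using y' y cls by auto
      have "f z = f (x' ** y')" using z R_iff by auto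
      then show ?thesis using mulS[OF x'S(1) y'S(1)] x'S y'S by simp
    qed
    have "x ** y \<in> Z"
    proof -
      have "x \<in> X" "y \<in> Y" using x y cls by auto
      moreover have "x ** y \<in> R `` {x ** y}" using mulS[OF x(1) y(1)] cls by auto
      ultimately show ?thesis unfolding Z_def by blast
    qed
    then have "(SOME z. z \<in> Z) \<in> Z" by (rule someI)
    then have "h Z = f x + f y" using allz unfolding h_def by blast
    then show "h (X \<otimes>\<^bsub>trace_monoid M (**) (mat 1) diag_blocks pair_mult n1 n2\<^esub> Y) =
        h X \<otimes>\<^bsub>add_matrix_monoid\<^esub> h Y"
      using mul hX x y by (simp add: add_matrix_monoid_def)
  qed
  have one: "h (one (trace_monoid M (**) (mat 1) diag_blocks pair_mult n1 n2)) = 0"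
  proof -
    have "one (trace_monoid M (**) (mat 1) diag_blocks pair_mult n1 n2) = R `` {mat 1}"
      by (simp add: trace_monoid_def R_def)
    then show ?thesis using hX[OF oneS] by (simp add: f_def mat1_blocks)
  qed
  have inj: "inj_on h (carrier (trace_monoid M (**) (mat 1) diag_blocks pair_mult n1 n2))"
  proof (rule inj_onI)
    fix X Y
    assume "X \<in> carrier (trace_monoid M (**) (mat 1) diag_blocks pair_mult n1 n2)"
      "Y \<in> carrier (trace_monoid M (**) (mat 1) diag_blocks pair_mult n1 n2)" and e: "h X = h Y"
    then obtain x y where x: "x \<in> S" "X = R `` {x}" and y: "y \<in> S" "Y = R `` {y}"
      unfolding carr by (auto elim!: quotientE)
    have "f x = f y" using e hX x y by simp
    then show "X = Y" using x y cls by auto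
  qed
  show ?thesis using hom one inj by blast
qed

end
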